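(* Let $\mathcal C$ be a Clifford circuit, $\rho$ an input state and $F\in\overline{\mathcal P}_{n(\Delta+1)}$ a fault operator. Define $f\in\mathbb Z_2^m$ by $f_j=[\overrightarrow F_{\ell_j-0.5},S_j]$ and let $E$ be a Hermitian representative of $\overrightarrow F_{\Delta+0.5}$. Then for all $o\in\mathbb Z_2^m$, $\mathbb P^{(F)}_{\mathcal C,\rho}(o)=\mathbb P_{\mathcal C,\rho}(o+f)$ and $\rho^{(F)}_o=E\rho_{o+f}E$.
   Context: A Clifford circuit $\mathcal C$ on $n$ qubits is a finite sequence of operations, each either a unitary Clifford gate or the measurement of a Hermitian $n$-qubit Pauli, each with a level in $\{1,2,\dots\}$; operations of equal level have disjoint supports and levels are nondecreasing. Depth $\Delta$ = maximal level. In circuit order the $j$-th measurement measures $S_j$ at level $\ell_j$ ($j=1,\dots,m$); outcome $o_j=0$ for eigenvalue $+1$, $1$ for $-1$. $\overline{\mathcal P}_N$ is the $N$-qubit Pauli group modulo phases; $[P,Q]\in\mathbb Z_2$ is $0$ iff $P,Q$ commute. $U_\ell$ is the product of the unitary gates of level $\ell$ (identity if none). A fault operator $F\in\overline{\mathcal P}_{n(\Delta+1)}$ acts on qubits $(\ell+0.5,q)$, $0\le\ell\le\Delta$, $1\le q\le n$; $F_{\ell+0.5}\in\overline{\mathcal P}_n$ is its component on level $\ell+0.5$. The cumulant $\overrightarrow F$ is obtained from $F$ by, for $\ell=1,\dots,\Delta$ in order, replacing $\overrightarrow F_{\ell+0.5}$ by $\overrightarrow F_{\ell+0.5}\cdot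 U_\ell\overrightarrow F_{\ell-0.5}U_\ell^{-1}$. Running $\mathcal C$ with faults $F$ on input $\rho$ means: apply $F_{0.5}$ to the input, then for $\ell=1,\dots,\Delta$ apply all level-$\ell$ operations and then the Pauli $F_{\ell+0.5}$. $\mathbb P^{(F)}_{\mathcal C,\rho}(o)$ is the probability of outcome bit-string $o$ and $\rho^{(F)}_o$ the final state conditioned on outcome $o$; $\mathbb P_{\mathcal C,\rho}$ and $\rho_o$ denote these for the fault-free run ($F=I$). *)

theory Defs
  imports "Jordan_Normal_Form.Schur_Decomposition"
begin

datatype pauli1 = PI | PX | PY | PZ

text \<open>An n-qubit Pauli modulo phases is a list of n single-qubit letters.\<close>
type_synonym pauli = "pauli1 list"

definition is_pauli :: "nat \<Rightarrow> pauli \<Rightarrow> bool" where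
  "is_pauli n P \<longleftrightarrow> length P = n"

fun sigma :: "pauli1 \<Rightarrow> bool \<Rightarrow> bool \<Rightarrow> complex" where
  "sigma PI a b = (if a = b then 1 else 0)"
| "sigma PX a b = (if a \<noteq> b then 1 else 0)"
| "sigma PY a b = (if a = b then 0 else if a then \<i> else - \<i>)"
| "sigma PZ a b = (if a = b then (if a then -1 else 1) else 0)"

text \<open>The tensor product of the letters, as a 2^n x 2^n matrix; qubit q
  corresponds to bit q of the basis index.\<close>
definition pauli_mat :: "nat \<Rightarrow> pauli \<Rightarrow> complex mat" where
  "pauli_mat n P = mat (2^n) (2^n)
     (\<lambda>(i, j). \<Prod>q<n. sigma (P ! q) (odd (i div 2^q)) (odd (j div 2^q)))"

text \<open>Product modulo phases.\<close>
fun mult1 :: "pauli1 \<Rightarrow> pauli1 \<Rightarrow> pauli1" where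
  "mult1 PI b = b"
| "mult1 a PI = a"
| "mult1 PX PX = PI" | "mult1 PY PY = PI" | "mult1 PZ PZ = PI"
| "mult1 PX PY = PZ" | "mult1 PY PX = PZ"
| "mult1 PX PZ = PY" | "mult1 PZ PX = PY"
| "mult1 PY PZ = PX" | "mult1 PZ PY = PX"

definition pauli_mult :: "pauli \<Rightarrow> pauli \<Rightarrow> pauli" where
  "pauli_mult P Q = map2 mult1 P Q"

text \<open>Commutator [P,Q] in Z_2 (True = anticommute).\<close>
definition anticomm1 :: "pauli1 \<Rightarrow> pauli1 \<Rightarrow> bool" where
  "anticomm1 a b \<longleftrightarrow> a \<noteq> PI \<and> b \<noteq> PI \<and> a \<noteq> b"

definition pauli_comm :: "pauli \<Rightarrow> pauli \<Rightarrow> bool" where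
  "pauli_comm P Q \<longleftrightarrow> odd (card {q. q < min (length P) (length Q) \<and> anticomm1 (P ! q) (Q ! q)})"

definition single_pauli :: "nat \<Rightarrow> nat \<Rightarrow> pauli1 \<Rightarrow> pauli" where
  "single_pauli n q a = (replicate n PI)[q := a]"

definition mat_trace :: "complex mat \<Rightarrow> complex" where
  "mat_trace A = (\<Sum>i<dim_row A. A $$ (i, i))"

definition unitary :: "nat \<Rightarrow> complex mat \<Rightarrow> bool" where
  "unitary d U \<longleftrightarrow> U \<in> carrier_mat d d \<and> U * mat_adjoint U = 1\<^sub>m d \<and> mat_adjoint U * U = 1\<^sub>m d"

definition hermitian :: "complex mat \<Rightarrow> bool" where
  "hermitian A \<longleftrightarrow> mat_adjoint A = A"

definition density_mat :: "nat \<Rightarrow> complex mat \<Rightarrow> bool" where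
  "density_mat n \<rho> \<longleftrightarrow> \<rho> \<in> carrier_mat (2^n) (2^n) \<and> hermitian \<rho> \<and>
     (\<forall>v \<in> carrier_vec (2^n). Re (conjugate v \<bullet> (\<rho> *\<^sub>v v)) \<ge> 0) \<and> mat_trace \<rho> = 1"

definition clifford_gate :: "nat \<Rightarrow> complex mat \<Rightarrow> bool" where
  "clifford_gate n U \<longleftrightarrow> unitary (2^n) U \<and>
     (\<forall>P. is_pauli n P \<longrightarrow> (\<exists>Q c. is_pauli n Q \<and>
        U * pauli_mat n P * mat_adjoint U = c \<cdot>\<^sub>m pauli_mat n Q))"

definition clifford_conj :: "nat \<Rightarrow> complex mat \<Rightarrow> pauli \<Rightarrow> pauli" where
  "clifford_conj n U P = (SOME Q. is_pauli n Q \<and>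
     (\<exists>c. U * pauli_mat n P * mat_adjoint U = c \<cdot>\<^sub>m pauli_mat n Q))"

text \<open>Support: qubits on which an operator acts non-trivially.  A unitary acts
  trivially on qubit q iff it commutes with X_q and Z_q.\<close>
definition gate_support :: "nat \<Rightarrow> complex mat \<Rightarrow> nat set" where
  "gate_support n U = {q. q < n \<and>
     (U * pauli_mat n (single_pauli n q PX) \<noteq> pauli_mat n (single_pauli n q PX) * U \<or>
      U * pauli_mat n (single_pauli n q PZ) \<noteq> pauli_mat n (single_pauli n q PZ) * U)}"

definition pauli_support :: "pauli \<Rightarrow> nat set" where
  "pauli_support P = {q. q < length P \<and> P ! q \<noteq> PI}"

text \<open>A measurement of the Hermitian Pauli (-1)^s P; the Boolean is the sign bit.\<close>
datatype operation = Gate "complex mat" | Meas bool pauli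

type_synonym circuit = "(nat \<times> operation) list"  \<comment> \<open>(level, operation)\<close>

definition meas_mat :: "nat \<Rightarrow> bool \<Rightarrow> pauli \<Rightarrow> complex mat" where
  "meas_mat n s P = (if s then -1 else 1) \<cdot>\<^sub>m pauli_mat n P"

fun op_support :: "nat \<Rightarrow> operation \<Rightarrow> nat set" where
  "op_support n (Gate U) = gate_support n U"
| "op_support n (Meas s P) = pauli_support P"

fun op_ok :: "nat \<Rightarrow> operation \<Rightarrow> bool" where
  "op_ok n (Gate U) = clifford_gate n U"
| "op_ok n (Meas s P) = is_pauli n P"

definition clifford_circuit :: "nat \<Rightarrow> circuit \<Rightarrow> bool" where
  "clifford_circuit n C \<longleftrightarrow>
     (\<forall>(l, op) \<in> set C. l \<ge> 1 \<and> op_ok n op) \<and>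
     sorted (map fst C) \<and>
     (\<forall>i j. i < length C \<and> j < length C \<and> i \<noteq> j \<and> fst (C ! i) = fst (C ! j) \<longrightarrow>
        op_support n (snd (C ! i)) \<inter> op_support n (snd (C ! j)) = {})"

definition depth :: "circuit \<Rightarrow> nat" where
  "depth C = Max (insert 0 (fst ` set C))"

definition measurements :: "circuit \<Rightarrow> (nat \<times> bool \<times> pauli) list" where
  "measurements C = concat (map (\<lambda>(l, op). case op of Meas s P \<Rightarrow> [(l, s, P)] | Gate U \<Rightarrow> []) C)"

definition num_meas :: "circuit \<Rightarrow> nat" where
  "num_meas C = length (measurements C)"

text \<open>U_l: product of the level-l gates (later gates applied after earlier ones).\<close>
definition level_unitary :: "nat \<Rightarrow> circuit \<Rightarrow> nat \<Rightarrow> complex mat" where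
  "level_unitary n C l = foldl (\<lambda>A (k, op). case op of Gate V \<Rightarrow> if k = l then V * A else A
                                                  | Meas s P \<Rightarrow> A) (1\<^sub>m (2^n)) C"

text \<open>A fault operator: F l is its component at level l + 0.5, l = 0..depth.\<close>
type_synonym fault = "nat \<Rightarrow> pauli"

definition is_fault :: "nat \<Rightarrow> circuit \<Rightarrow> fault \<Rightarrow> bool" where
  "is_fault n C F \<longleftrightarrow> (\<forall>l \<le> depth C. is_pauli n (F l))"

text \<open>Cumulant: cumulant n C F l is the component at level l + 0.5.\<close>
fun cumulant :: "nat \<Rightarrow> circuit \<Rightarrow> fault \<Rightarrow> nat \<Rightarrow> pauli" where
  "cumulant n C F 0 = F 0"
| "cumulant n C F (Suc l) =
     pauli_mult (F (Suc l)) (clifford_conj n (level_unitary n C (Suc l)) (cumulant n C F l))"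

datatype step = UStep "complex mat" | MStep "complex mat"

definition proj :: "nat \<Rightarrow> complex mat \<Rightarrow> bool \<Rightarrow> complex mat" where
  "proj n A b = (1 / 2 :: complex) \<cdot>\<^sub>m (1\<^sub>m (2^n) + (if b then -1 else 1) \<cdot>\<^sub>m A)"

text \<open>Unnormalised post-measurement state; outcomes consumed in order
  (False = outcome 0 = eigenvalue +1).\<close>
fun exec :: "nat \<Rightarrow> step list \<Rightarrow> bool list \<Rightarrow> complex mat \<Rightarrow> complex mat" where
  "exec n [] os \<rho> = \<rho>"
| "exec n (UStep V # ss) os \<rho> = exec n ss os (V * \<rho> * mat_adjoint V)"
| "exec n (MStep A # ss) (b # os) \<rho> = exec n ss os (proj n A b * \<rho> * proj n A b)"
| "exec n (MStep A # ss) [] \<rho> = 0\<^sub>m (2^n) (2^n)"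

definition op_step :: "nat \<Rightarrow> operation \<Rightarrow> step" where
  "op_step n op = (case op of Gate U \<Rightarrow> UStep U | Meas s P \<Rightarrow> MStep (meas_mat n s P))"

definition faulty_steps :: "nat \<Rightarrow> circuit \<Rightarrow> fault \<Rightarrow> step list" where
  "faulty_steps n C F = UStep (pauli_mat n (F 0)) #
     concat (map (\<lambda>l. map (op_step n \<circ> snd) (filter (\<lambda>x. fst x = l) C) @ [UStep (pauli_mat n (F l))])
                 [1..<Suc (depth C)])"

definition no_fault :: "nat \<Rightarrow> fault" where
  "no_fault n = (\<lambda>l. replicate n PI)"

definition prob_F :: "nat \<Rightarrow> circuit \<Rightarrow> fault \<Rightarrow> complex mat \<Rightarrow> bool list \<Rightarrow> real" where
  "prob_F n C F \<rho> os = Re (mat_trace (exec n (faulty_steps n C F) os \<rho>))"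

definition state_F :: "nat \<Rightarrow> circuit \<Rightarrow> fault \<Rightarrow> complex mat \<Rightarrow> bool list \<Rightarrow> complex mat" where
  "state_F n C F \<rho> os = complex_of_real (1 / prob_F n C F \<rho> os) \<cdot>\<^sub>m exec n (faulty_steps n C F) os \<rho>"

definition prob :: "nat \<Rightarrow> circuit \<Rightarrow> complex mat \<Rightarrow> bool list \<Rightarrow> real" where
  "prob n C \<rho> os = prob_F n C (no_fault n) \<rho> os"

definition state :: "nat \<Rightarrow> circuit \<Rightarrow> complex mat \<Rightarrow> bool list \<Rightarrow> complex mat" where
  "state n C \<rho> os = state_F n C (no_fault n) \<rho> os"

text \<open>Syndrome-flip vector f: f_j = [cumulant at level l_j - 0.5, S_j].\<close>
definition flip_vector :: "nat \<Rightarrow> circuit \<Rightarrow> fault \<Rightarrow> bool list" where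
  "flip_vector n C F = map (\<lambda>(l, s, P). pauli_comm (cumulant n C F (l - 1)) P) (measurements C)"

definition xor_list :: "bool list \<Rightarrow> bool list \<Rightarrow> bool list" where
  "xor_list a b = map2 (\<noteq>) a b"

end

theory Submission
  imports Defs
begin


lemma bit_high_div:
  fixes k q n :: nat
  assumes "q < n"
  shows "odd ((2^n + k) div 2^q) = odd (k div 2^q)"
proof -
  have "(2::nat)^n = 2^q * 2^(n-q)" using assms by (simp add: power_add[symmetric])
  hence "(2^n + k) div 2^q = 2^(n-q) + k div 2^q" by simp
  moreover have "even ((2::nat)^(n-q))" using assms by simp
  ultimately show ?thesis by simp
qed

lemma sum_prod_bits:
  fixes g :: "nat \<Rightarrow> bool \<Rightarrow> 'a::comm_semiring_1"
  shows "(\<Sum>k<(2::nat)^n. \<Prod>q<n. g q (odd (k div 2^q))) = (\<Prod>q<n. g q False + g q True)"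
proof (induction n)
  case 0
  then show ?case by simp
next
  case (Suc n)
  have split: "{..<(2::nat)^Suc n} = {..<2^n} \<union> (\<lambda>k::nat. 2^n + k) ` {..<2^n}"
  proof -
    have "x \<in> (\<lambda>k::nat. 2^n + k) ` {..<2^n}" if "2^n \<le> x" "x < 2^Suc n" for x :: nat
      using that by (intro image_eqI[of _ _ "x - 2^n"]) auto
    then show ?thesis by (auto simp: not_less) (meson not_less)
  qed
  have disj: "{..<(2::nat)^n} \<inter> (\<lambda>k::nat. 2^n + k) ` {..<2^n} = {}" by auto
  have "(\<Sum>k<(2::nat)^Suc n. \<Prod>q<Suc n. g q (odd (k div 2^q)))
      = (\<Sum>k<(2::nat)^n. \<Prod>q<Suc n. g q (odd (k div 2^q))) +
        (\<Sum>k\<in>(\<lambda>k::nat. 2^n + k) ` {..<2^n}. \<Prod>q<Suc n. g q (odd (k div 2^q)))"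
    unfolding split by (rule sum.union_disjoint) (use disj in auto)
  also have "(\<Sum>k<(2::nat)^n. \<Prod>q<Suc n. g q (odd (k div 2^q))) =
     (\<Sum>k<(2::nat)^n. (\<Prod>q<n. g q (odd (k div 2^q))) * g n False)"
    by (rule sum.cong) auto
  also have "(\<Sum>k\<in>(\<lambda>k::nat. 2^n + k) ` {..<2^n}. \<Prod>q<Suc n. g q (odd (k div 2^q)))
      = (\<Sum>k<(2::nat)^n. \<Prod>q<Suc n. g q (odd ((2^n + k) div 2^q)))"
    by (subst sum.reindex) (auto simp: inj_on_def)
  also have "\<dots> = (\<Sum>k<(2::nat)^n. (\<Prod>q<n. g q (odd (k div 2^q))) * g n True)"
  proof (rule sum.cong)
    fix k assume k: "k \<in> {..<(2::nat)^n}"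
    have "(\<Prod>q<n. g q (odd ((2^n + k) div 2^q))) = (\<Prod>q<n. g q (odd (k div 2^q)))"
      by (rule prod.cong) (auto simp: bit_high_div)
    moreover have "(2^n + k) div 2^n = 1" using k by auto
    ultimately show "(\<Prod>q<Suc n. g q (odd ((2^n + k) div 2^q))) = (\<Prod>q<n. g q (odd (k div 2^q))) * g n True"
      by simp
  qed simp
  finally show ?case
    by (simp add: sum_distrib_right[symmetric] Suc.IH distrib_left)
qed

definition tens :: "nat \<Rightarrow> (nat \<Rightarrow> bool \<Rightarrow> bool \<Rightarrow> complex) \<Rightarrow> complex mat" where
  "tens n a = mat (2^n) (2^n) (\<lambda>(i, j). \<Prod>q<n. a q (odd (i div 2^q)) (odd (j div 2^q)))"

lemma tens_carrier[simp]: "tens n a \<in> carrier_mat (2^n) (2^n)"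
  by (simp add: tens_def)

lemma tens_dims[simp]: "dim_row (tens n a) = 2^n" "dim_col (tens n a) = 2^n"
  by (simp_all add: tens_def)

lemma tens_index[simp]: "i < 2^n \<Longrightarrow> j < 2^n \<Longrightarrow>
  tens n a $$ (i, j) = (\<Prod>q<n. a q (odd (i div 2^q)) (odd (j div 2^q)))"
  by (simp add: tens_def)

lemma tens_mult: "tens n a * tens n b = tens n (\<lambda>q x y. a q x False * b q False y + a q x True * b q True y)"
proof (rule eq_matI)
  fix i j assume i: "i < dim_row (tens n (\<lambda>q x y. a q x False * b q False y + a q x True * b q True y))"
    and j: "j < dim_col (tens n (\<lambda>q x y. a q x False * b q False y + a q x True * b q True y))"
  hence i: "i < 2^n" and j: "j < 2^n" by auto
  have "(tens n a * tens n b) $$ (i, j) = (\<Sum>k<(2::nat)^n. tens n a $$ (i,k) * tens n b $$ (k, j))"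
    using i j by (simp add: scalar_prod_def lessThan_atLeast0)
  also have "\<dots> = (\<Sum>k<(2::nat)^n. \<Prod>q<n. a q (odd (i div 2^q)) (odd (k div 2^q)) * b q (odd (k div 2^q)) (odd (j div 2^q)))"
    using i j by (intro sum.cong) (auto simp: prod.distrib)
  also have "\<dots> = (\<Prod>q<n. a q (odd (i div 2^q)) False * b q False (odd (j div 2^q)) + a q (odd (i div 2^q)) True * b q True (odd (j div 2^q)))"
    by (rule sum_prod_bits[where g = "\<lambda>q z. a q (odd (i div 2^q)) z * b q z (odd (j div 2^q))"])
  finally show "(tens n a * tens n b) $$ (i, j) = tens n (\<lambda>q x y. a q x False * b q False y + a q x True * b q True y) $$ (i, j)"
    using i j by simp
qed auto



lemma adj_eq: "mat_adjoint (A :: complex mat) = mat (dim_col A) (dim_row A) (\<lambda>(i,j). cnj (A $$ (j,i)))"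
  by (rule eq_matI) (auto simp: mat_adjoint_def mat_of_rows_index)

lemma adj_carrier[simp]: "A \<in> carrier_mat a b \<Longrightarrow> mat_adjoint (A :: complex mat) \<in> carrier_mat b a"
  by (auto simp: adj_eq)

lemma adj_dims[simp]: "dim_row (mat_adjoint (A :: complex mat)) = dim_col A"
  "dim_col (mat_adjoint (A :: complex mat)) = dim_row A"
  by (auto simp: adj_eq)

lemma adj_index[simp]: "i < dim_col A \<Longrightarrow> j < dim_row A \<Longrightarrow> mat_adjoint (A :: complex mat) $$ (i,j) = cnj (A $$ (j,i))"
  by (auto simp: adj_eq)

lemma adj_adj[simp]: "mat_adjoint (mat_adjoint (A :: complex mat)) = A"
  by (rule eq_matI) auto

lemma adj_mult: assumes "A \<in> carrier_mat a b" "B \<in> carrier_mat b c"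
  shows "mat_adjoint ((A :: complex mat) * B) = mat_adjoint B * mat_adjoint A"
proof (rule eq_matI)
  fix i j assume "i < dim_row (mat_adjoint B * mat_adjoint A)" "j < dim_col (mat_adjoint B * mat_adjoint A)"
  with assms have i: "i < c" and j: "j < a" by auto
  show "mat_adjoint (A * B) $$ (i, j) = (mat_adjoint B * mat_adjoint A) $$ (i, j)"
    using assms i j by (auto simp: scalar_prod_def mult.commute intro!: sum.cong)
qed (use assms in auto)

lemma adj_smult: "mat_adjoint (k \<cdot>\<^sub>m (A :: complex mat)) = cnj k \<cdot>\<^sub>m mat_adjoint A"
  by (rule eq_matI) auto

lemma adj_one[simp]: "mat_adjoint (1\<^sub>m d :: complex mat) = 1\<^sub>m d"
  by (rule eq_matI) auto

lemma bits_eq: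
  fixes i j :: nat
  assumes "i < 2^n" "j < 2^n" "\<forall>q<n. odd (i div 2^q) = odd (j div 2^q)"
  shows "i = j"
  using assms
proof (induction n arbitrary: i j)
  case 0 then show ?case by simp
next
  case (Suc n)
  have "i div 2 = j div 2"
  proof (rule Suc.IH)
    show "i div 2 < 2^n" "j div 2 < 2^n" using Suc.prems by auto
    show "\<forall>q<n. odd (i div 2 div 2 ^ q) = odd (j div 2 div 2 ^ q)"
    proof (intro allI impI)
      fix q assume "q < n"
      then have "odd (i div 2^Suc q) = odd (j div 2^Suc q)" using Suc.prems(3) by auto
      then show "odd (i div 2 div 2 ^ q) = odd (j div 2 div 2 ^ q)" by (simp add: div_mult2_eq)
    qed
  qed
  moreover have "odd i = odd j" using Suc.prems(3)[rule_format, of 0] by simp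
  ultimately show ?case by (metis div_mult_mod_eq odd_iff_mod_2_eq_one parity_cases)
qed

lemma tens_delta: "tens n (\<lambda>q x y. if x = y then 1 else 0) = 1\<^sub>m (2^n)"
proof (rule eq_matI)
  fix i j assume "i < dim_row (1\<^sub>m (2^n) :: complex mat)" "j < dim_col (1\<^sub>m (2^n) :: complex mat)"
  hence i: "i < 2^n" and j: "j < 2^n" by auto
  show "tens n (\<lambda>q x y. if x = y then 1 else 0) $$ (i, j) = 1\<^sub>m (2 ^ n) $$ (i, j)"
  proof (cases "i = j")
    case True then show ?thesis using i j by simp
  next
    case False
    then obtain q where q: "q < n" "odd (i div 2^q) \<noteq> odd (j div 2^q)" using bits_eq[OF i j] by blast
    have "(\<Prod>q<n. (if odd (i div 2^q) = odd (j div 2^q) then 1 else 0 :: complex)) = 0"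
      using q by (intro prod_zero) auto
    then show ?thesis using i j False by simp
  qed
qed auto

lemma tens_scale: "tens n (\<lambda>q x y. c q * b q x y) = (\<Prod>q<n. c q) \<cdot>\<^sub>m tens n b"
  by (rule eq_matI) (auto simp: prod.distrib)

lemma tens_cong: "(\<And>q x y. q < n \<Longrightarrow> a q x y = b q x y) \<Longrightarrow> tens n a = tens n b"
  by (rule eq_matI) (auto intro!: prod.cong)

lemma tens_adj: "mat_adjoint (tens n a) = tens n (\<lambda>q x y. cnj (a q y x))"
  by (rule eq_matI) (auto simp: cnj_prod)



fun ph1 :: "pauli1 \<Rightarrow> pauli1 \<Rightarrow> complex" where
  "ph1 PX PY = \<i>" | "ph1 PY PX = - \<i>" | "ph1 PY PZ = \<i>" | "ph1 PZ PY = - \<i>"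
| "ph1 PZ PX = \<i>" | "ph1 PX PZ = - \<i>" | "ph1 _ _ = 1"

lemma sigma_mult1: "sigma a x False * sigma b False y + sigma a x True * sigma b True y
   = ph1 a b * sigma (mult1 a b) x y"
  by (cases a; cases b; cases x; cases y; simp)

lemma sigma_comm1: "sigma a x False * sigma b False y + sigma a x True * sigma b True y
   = (if anticomm1 a b then -1 else 1) * (sigma b x False * sigma a False y + sigma b x True * sigma a True y)"
  by (cases a; cases b; cases x; cases y; simp add: anticomm1_def)

lemma sigma_sq1: "sigma a x False * sigma a False y + sigma a x True * sigma a True y = (if x = y then 1 else 0)"
  by (cases a; cases x; cases y; simp)

lemma sigma_herm1: "cnj (sigma a y x) = sigma a x y"
  by (cases a; cases x; cases y; simp)

lemma ph1_nz: "ph1 a b \<noteq> 0"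
  by (cases a; cases b; simp)

lemma ph1_I: "ph1 PI b = 1" "ph1 a PI = 1"
  by (cases b; simp) (cases a; simp)



abbreviation pm where "pm n P \<equiv> pauli_mat n P"

lemma pm_tens: "pauli_mat n P = tens n (\<lambda>q. sigma (P ! q))"
  by (simp add: pauli_mat_def tens_def)

lemma pm_carrier[simp]: "pauli_mat n P \<in> carrier_mat (2^n) (2^n)"
  by (simp add: pm_tens)

lemma pm_dims[simp]: "dim_row (pauli_mat n P) = 2^n" "dim_col (pauli_mat n P) = 2^n"
  by (simp_all add: pm_tens)

lemma pm_mult: assumes "length P = n" "length Q = n"
  shows "pm n P * pm n Q = (\<Prod>q<n. ph1 (P!q) (Q!q)) \<cdot>\<^sub>m pm n (pauli_mult P Q)"
proof -
  have "pm n P * pm n Q = tens n (\<lambda>q x y. ph1 (P!q) (Q!q) * sigma (pauli_mult P Q ! q) x y)"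
    unfolding pm_tens tens_mult
    by (rule tens_cong) (use assms in \<open>simp add: sigma_mult1 pauli_mult_def\<close>)
  then show ?thesis by (simp add: tens_scale pm_tens)
qed

lemma prod_sign: "(\<Prod>q<(n::nat). (if A q then -1 else 1 :: complex)) = (if odd (card {q. q < n \<and> A q}) then -1 else 1)"
proof -
  have "(\<Prod>q<n. (if A q then -1 else 1 :: complex)) = (\<Prod>q\<in>{q. q < n \<and> A q}. -1)"
    by (rule prod.mono_neutral_cong_right) (simp_all, auto)
  also have "\<dots> = (-1) ^ card {q. q < n \<and> A q}" by simp
  finally show ?thesis by simp
qed

lemma pm_comm: assumes "length P = n" "length Q = n"
  shows "pm n P * pm n Q = (if pauli_comm P Q then -1 else 1) \<cdot>\<^sub>m (pm n Q * pm n P)"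
proof -
  have "pm n P * pm n Q = tens n (\<lambda>q x y. (if anticomm1 (P!q) (Q!q) then -1 else 1) *
      (sigma (Q!q) x False * sigma (P!q) False y + sigma (Q!q) x True * sigma (P!q) True y))"
    unfolding pm_tens tens_mult by (rule tens_cong) (rule sigma_comm1)
  also have "\<dots> = (\<Prod>q<n. (if anticomm1 (P!q) (Q!q) then -1 else 1)) \<cdot>\<^sub>m (pm n Q * pm n P)"
    unfolding tens_scale pm_tens tens_mult ..
  finally show ?thesis using assms by (simp add: prod_sign pauli_comm_def)
qed

lemma pm_sq: "pm n P * pm n P = 1\<^sub>m (2^n)"
  unfolding pm_tens tens_mult sigma_sq1 tens_delta ..

lemma pm_adj: "mat_adjoint (pm n P) = pm n P"
  unfolding pm_tens tens_adj sigma_herm1 ..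

lemma pm_id: "pm n (replicate n PI) = 1\<^sub>m (2^n)"
proof -
  have "pm n (replicate n PI) = tens n (\<lambda>q x y. if x = y then 1 else 0)"
    unfolding pm_tens by (rule tens_cong) simp
  then show ?thesis by (simp add: tens_delta)
qed



lemma massoc[simp]: "dim_col A = dim_row B \<Longrightarrow> dim_col B = dim_row C \<Longrightarrow> (A * B) * (C :: complex mat) = A * (B * C)"
  by (rule assoc_mult_mat[of A "dim_row A" "dim_col A" B "dim_col B" C "dim_col C"]) auto

lemma msmult_r[simp]: "dim_col A = dim_row B \<Longrightarrow> (A :: complex mat) * (k \<cdot>\<^sub>m B) = k \<cdot>\<^sub>m (A * B)"
  by (rule mult_smult_distrib[of A "dim_row A" "dim_col A" B "dim_col B"]) auto

lemma msmult_l[simp]: "dim_col A = dim_row B \<Longrightarrow> (k \<cdot>\<^sub>m A) * (B :: complex mat) = k \<cdot>\<^sub>m (A * B)"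
  by (rule mult_smult_assoc_mat[of A "dim_row A" "dim_col A" B "dim_col B"]) auto

lemma smult_smult_m[simp]: "a \<cdot>\<^sub>m (b \<cdot>\<^sub>m (A :: complex mat)) = (a * b) \<cdot>\<^sub>m A"
  by (rule eq_matI) auto

lemma one_smult_m[simp]: "1 \<cdot>\<^sub>m (A :: complex mat) = A"
  by (rule eq_matI) auto

lemma adj_mult': "dim_col A = dim_row B \<Longrightarrow> mat_adjoint ((A :: complex mat) * B) = mat_adjoint B * mat_adjoint A"
  by (rule adj_mult[of A "dim_row A" "dim_col A" B "dim_col B"]) auto

lemma carrier_dims: "A \<in> carrier_mat a b \<Longrightarrow> dim_row A = a \<and> dim_col A = b" by auto

lemma unitaryD: assumes "unitary d U"
  shows "U \<in> carrier_mat d d" "U * mat_adjoint U = 1\<^sub>m d" "mat_adjoint U * U = 1\<^sub>m d"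
  using assms by (auto simp: unitary_def)

lemma pm_unitary: "unitary (2^n) (pm n P)"
  by (simp add: unitary_def pm_adj pm_sq)

lemma unitary_mult: assumes "unitary d U" "unitary d V" shows "unitary d (U * V)"
proof -
  have U: "U \<in> carrier_mat d d" and V: "V \<in> carrier_mat d d" using assms by (auto simp: unitary_def)
  have aU: "mat_adjoint U \<in> carrier_mat d d" and aV: "mat_adjoint V \<in> carrier_mat d d" using U V by auto
  have "U * V * mat_adjoint (U * V) = U * (V * mat_adjoint V) * mat_adjoint U"
    using U V aU aV by (simp add: adj_mult[OF U V] carrier_dims)
  also have "\<dots> = 1\<^sub>m d" using assms U aU by (simp add: unitary_def carrier_dims)
  finally have 1: "U * V * mat_adjoint (U * V) = 1\<^sub>m d" .
  have "mat_adjoint (U * V) * (U * V) = mat_adjoint V * (mat_adjoint U * U) * V"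
    using U V aU aV by (simp add: adj_mult[OF U V] carrier_dims)
  also have "\<dots> = 1\<^sub>m d" using assms V aV by (simp add: unitary_def carrier_dims)
  finally show ?thesis using 1 U V by (simp add: unitary_def)
qed

lemma unitary_one: "unitary d (1\<^sub>m d)"
  by (simp add: unitary_def)

lemma clifford_one: "clifford_gate n (1\<^sub>m (2^n))"
proof -
  have "\<exists>Q c. is_pauli n Q \<and> 1\<^sub>m (2^n) * pm n P * mat_adjoint (1\<^sub>m (2^n)) = c \<cdot>\<^sub>m pm n Q" if "is_pauli n P" for P
    using that by (intro exI[of _ P] exI[of _ 1]) (simp add: is_pauli_def)
  then show ?thesis by (simp add: clifford_gate_def unitary_one)
qed

lemma clifford_mult: assumes "clifford_gate n U" "clifford_gate n V" shows "clifford_gate n (U * V)"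
proof -
  have U: "U \<in> carrier_mat (2^n) (2^n)" and V: "V \<in> carrier_mat (2^n) (2^n)"
    using assms by (auto simp: clifford_gate_def unitary_def)
  have "\<exists>Q c. is_pauli n Q \<and> U * V * pm n P * mat_adjoint (U * V) = c \<cdot>\<^sub>m pm n Q" if P: "is_pauli n P" for P
  proof -
    obtain Q c where Q: "is_pauli n Q" and c: "V * pm n P * mat_adjoint V = c \<cdot>\<^sub>m pm n Q"
      using assms(2) P unfolding clifford_gate_def by blast
    obtain R d where R: "is_pauli n R" and d: "U * pm n Q * mat_adjoint U = d \<cdot>\<^sub>m pm n R"
      using assms(1) Q unfolding clifford_gate_def by blast
    have "U * V * pm n P * mat_adjoint (U * V) = U * (V * pm n P * mat_adjoint V) * mat_adjoint U"
      using U V by (simp add: adj_mult[OF U V] carrier_dims)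
    also have "\<dots> = c \<cdot>\<^sub>m (U * pm n Q * mat_adjoint U)"
      unfolding c using U by (simp add: carrier_dims)
    also have "\<dots> = (c * d) \<cdot>\<^sub>m pm n R" unfolding d by simp
    finally show ?thesis using R by blast
  qed
  then show ?thesis using assms by (simp add: clifford_gate_def unitary_mult)
qed

lemma clifford_conj_spec: assumes "clifford_gate n U" "is_pauli n P"
  shows "is_pauli n (clifford_conj n U P) \<and>
    (\<exists>c. U * pm n P * mat_adjoint U = c \<cdot>\<^sub>m pm n (clifford_conj n U P))"
proof -
  have "\<exists>Q. is_pauli n Q \<and> (\<exists>c. U * pm n P * mat_adjoint U = c \<cdot>\<^sub>m pm n Q)"
    using assms unfolding clifford_gate_def by blast
  then show ?thesis unfolding clifford_conj_def by (rule someI_ex)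
qed

lemma comm_mult: assumes "V \<in> carrier_mat d d" "A \<in> carrier_mat d d" "B \<in> carrier_mat d d"
  "V * A = A * V" "V * B = B * V"
  shows "V * (A * B) = (A * B) * V"
proof -
  have "V * (A * B) = (V * A) * B" using assms(1-3) by (simp add: carrier_dims)
  also have "\<dots> = (A * V) * B" by (simp only: assms(4))
  also have "\<dots> = A * (V * B)" using assms(1-3) by (simp add: carrier_dims)
  also have "\<dots> = A * (B * V)" by (simp only: assms(5))
  also have "\<dots> = (A * B) * V" using assms(1-3) by (simp add: carrier_dims)
  finally show ?thesis .
qed

lemma mult1_PI_r[simp]: "mult1 a PI = a" by (cases a) auto

lemma single_len[simp]: "length (single_pauli n q a) = n"
  by (simp add: single_pauli_def)

lemma single_nth: "q' < n \<Longrightarrow> single_pauli n q a ! q' = (if q' = q then a else PI)"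
  by (simp add: single_pauli_def nth_list_update)

lemma single_PI: "q < n \<Longrightarrow> single_pauli n q PI = replicate n PI"
  by (rule nth_equalityI) (auto simp: single_nth)

lemma pm_mult_disjoint: assumes "length P = n" "length Q = n" "\<forall>q<n. P ! q = PI \<or> Q ! q = PI"
  shows "pm n P * pm n Q = pm n (pauli_mult P Q)"
proof -
  have "(\<Prod>q<n. ph1 (P!q) (Q!q)) = 1" using assms(3) by (intro prod.neutral) (auto simp: ph1_I)
  then show ?thesis using pm_mult[OF assms(1,2)] by simp
qed

lemma single_Y: assumes "k < n"
  shows "pm n (single_pauli n k PY) = \<i> \<cdot>\<^sub>m (pm n (single_pauli n k PX) * pm n (single_pauli n k PZ))"
proof -
  have ph: "(\<Prod>q<n. ph1 (single_pauli n k PX ! q) (single_pauli n k PZ ! q)) = - \<i>"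
  proof -
    have "(\<Prod>q<n. ph1 (single_pauli n k PX ! q) (single_pauli n k PZ ! q)) =
          (\<Prod>q\<in>{k}. ph1 (single_pauli n k PX ! q) (single_pauli n k PZ ! q))"
      using assms by (intro prod.mono_neutral_right) (auto simp: single_nth)
    then show ?thesis using assms by (simp add: single_nth)
  qed
  have m: "pauli_mult (single_pauli n k PX) (single_pauli n k PZ) = single_pauli n k PY"
    by (rule nth_equalityI) (auto simp: pauli_mult_def single_nth)
  show ?thesis using pm_mult[of "single_pauli n k PX" n "single_pauli n k PZ"]
    by (simp add: ph m)
qed

lemma gate_comm_single: assumes V: "V \<in> carrier_mat (2^n) (2^n)" and k: "k < n"
  and nc: "k \<notin> gate_support n V"
  shows "V * pm n (single_pauli n k a) = pm n (single_pauli n k a) * V"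
proof -
  have X: "V * pm n (single_pauli n k PX) = pm n (single_pauli n k PX) * V"
   and Z: "V * pm n (single_pauli n k PZ) = pm n (single_pauli n k PZ) * V"
    using nc k by (auto simp: gate_support_def)
  show ?thesis
  proof (cases a)
    case PI then show ?thesis using V k by (simp add: single_PI pm_id)
  next
    case PX then show ?thesis using X by simp
  next
    case PZ then show ?thesis using Z by simp
  next
    case PY
    have "V * (pm n (single_pauli n k PX) * pm n (single_pauli n k PZ)) =
          (pm n (single_pauli n k PX) * pm n (single_pauli n k PZ)) * V"
      by (rule comm_mult[OF V _ _ X Z]) auto
    then show ?thesis using PY V k
      by (simp add: single_Y carrier_dims)
  qed
qed

lemma gate_comm_pauli: assumes V: "V \<in> carrier_mat (2^n) (2^n)" and S: "is_pauli n S"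
  and disj: "pauli_support S \<inter> gate_support n V = {}"
  shows "V * pm n S = pm n S * V"
proof -
  define T where "T k = map (\<lambda>q. if q < k then S ! q else PI) [0..<n]" for k
  have "V * pm n (T k) = pm n (T k) * V" if "k \<le> n" for k
    using that
  proof (induction k)
    case 0
    have "T 0 = replicate n PI" by (simp add: T_def map_replicate_const)
    then show ?case using V by (simp add: pm_id)
  next
    case (Suc k)
    have k: "k < n" using Suc.prems by simp
    have eq: "T (Suc k) = pauli_mult (T k) (single_pauli n k (S ! k))"
      by (rule nth_equalityI) (auto simp: T_def pauli_mult_def single_nth)
    have "pm n (T (Suc k)) = pm n (T k) * pm n (single_pauli n k (S ! k))"
      unfolding eq by (rule pm_mult_disjoint[symmetric]) (auto simp: T_def single_nth)
    moreover have "V * pm n (single_pauli n k (S ! k)) = pm n (single_pauli n k (S ! k)) * V"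
    proof (cases "S ! k = PI")
      case True then show ?thesis using V k by (simp add: single_PI pm_id)
    next
      case False
      then have "k \<in> pauli_support S" using S k by (simp add: pauli_support_def is_pauli_def)
      then have "k \<notin> gate_support n V" using disj by blast
      then show ?thesis by (rule gate_comm_single[OF V k])
    qed
    ultimately show ?case using comm_mult[OF V] Suc by simp
  qed
  moreover have "T n = S" using S by (intro nth_equalityI) (auto simp: T_def is_pauli_def)
  ultimately show ?thesis by auto
qed



lemma madd_l[simp]: "dim_row A = dim_row B \<Longrightarrow> dim_col A = dim_col B \<Longrightarrow> dim_col A = dim_row C \<Longrightarrow>
  ((A :: complex mat) + B) * C = A * C + B * C"
  by (rule add_mult_distrib_mat[of A "dim_row A" "dim_col A" B C "dim_col C"]) auto

lemma madd_r[simp]: "dim_col A = dim_row B \<Longrightarrow> dim_row B = dim_row C \<Longrightarrow> dim_col B = dim_col C \<Longrightarrow>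
  (A :: complex mat) * (B + C) = A * B + A * C"
  by (rule mult_add_distrib_mat[of A "dim_row A" "dim_col A" B "dim_col B" C]) auto

definition sg :: "bool \<Rightarrow> complex" where "sg b = (if b then -1 else 1)"

definition ac :: "complex mat \<Rightarrow> complex mat \<Rightarrow> bool \<Rightarrow> bool" where
  "ac A W f \<longleftrightarrow> A * W = sg f \<cdot>\<^sub>m (W * A)"

lemma proj_comm: assumes A: "A \<in> carrier_mat (2^n) (2^n)" and W: "W \<in> carrier_mat (2^n) (2^n)"
  and "ac A W f"
  shows "proj n A b * W = W * proj n A (b \<noteq> f)"
proof -
  have e: "A * W = sg f \<cdot>\<^sub>m (W * A)" using assms(3) by (simp add: ac_def)
  have "proj n A b * W = (1/2) \<cdot>\<^sub>m (W + (sg b * sg f) \<cdot>\<^sub>m (W * A))"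
    using A W by (simp add: proj_def carrier_dims e sg_def)
  also have "\<dots> = W * proj n A (b \<noteq> f)"
    using A W by (cases b; cases f) (simp_all add: proj_def carrier_dims sg_def)
  finally show ?thesis .
qed



lemma unit_cancel: assumes "unitary d V" "dim_row Y = d"
  shows "mat_adjoint V * (V * Y) = Y" "V * (mat_adjoint V * Y) = Y"
proof -
  have V: "V \<in> carrier_mat d d" and 1: "mat_adjoint V * V = 1\<^sub>m d" and 2: "V * mat_adjoint V = 1\<^sub>m d"
    using assms(1) by (auto simp: unitary_def)
  have "mat_adjoint V * (V * Y) = (mat_adjoint V * V) * Y" using V assms(2) by (simp add: carrier_dims)
  then show "mat_adjoint V * (V * Y) = Y" using 1 assms(2) by simp
  have "V * (mat_adjoint V * Y) = (V * mat_adjoint V) * Y" using V assms(2) by (simp add: carrier_dims)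
  then show "V * (mat_adjoint V * Y) = Y" using 2 assms(2) by simp
qed

lemma comm_adj: assumes U: "unitary d V" and A: "A \<in> carrier_mat d d" and c: "V * A = A * V"
  shows "mat_adjoint V * A = A * mat_adjoint V"
proof -
  have V: "V \<in> carrier_mat d d" using U by (auto simp: unitary_def)
  have "mat_adjoint V * A = mat_adjoint V * (A * (V * mat_adjoint V))"
    using U A by (simp add: unitary_def carrier_dims)
  also have "\<dots> = mat_adjoint V * ((A * V) * mat_adjoint V)" using A V by (simp add: carrier_dims)
  also have "\<dots> = mat_adjoint V * ((V * A) * mat_adjoint V)" by (simp only: c)
  also have "\<dots> = (mat_adjoint V * V) * (A * mat_adjoint V)" using A V by (simp add: carrier_dims)
  also have "\<dots> = A * mat_adjoint V" using U A by (simp add: unitary_def carrier_dims)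
  finally show ?thesis .
qed

lemma ac_conj: assumes U: "unitary d V" and A: "A \<in> carrier_mat d d" and W: "W \<in> carrier_mat d d"
  and c: "V * A = A * V" and a: "ac A W f"
  shows "ac A (V * W * mat_adjoint V) f"
proof -
  have V: "V \<in> carrier_mat d d" using U by (auto simp: unitary_def)
  have c2: "mat_adjoint V * A = A * mat_adjoint V" by (rule comm_adj[OF U A c])
  have e: "A * W = sg f \<cdot>\<^sub>m (W * A)" using a by (simp add: ac_def)
  have "A * (V * W * mat_adjoint V) = (A * V) * W * mat_adjoint V" using A V W by (simp add: carrier_dims)
  also have "\<dots> = (V * A) * W * mat_adjoint V" by (simp only: c)
  also have "\<dots> = V * (A * W) * mat_adjoint V" using A V W by (simp add: carrier_dims)
  also have "\<dots> = sg f \<cdot>\<^sub>m (V * W * (A * mat_adjoint V))" using A V W by (simp add: carrier_dims e)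
  also have "\<dots> = sg f \<cdot>\<^sub>m (V * W * (mat_adjoint V * A))" by (simp only: c2)
  also have "\<dots> = sg f \<cdot>\<^sub>m ((V * W * mat_adjoint V) * A)" using A V W by (simp add: carrier_dims)
  finally show ?thesis by (simp add: ac_def)
qed

lemma adj_conj: fixes V W :: "complex mat" assumes "V \<in> carrier_mat d d" "W \<in> carrier_mat d d"
  shows "mat_adjoint (V * W * mat_adjoint V) = V * mat_adjoint W * mat_adjoint V"
proof -
  have d: "dim_row V = d" "dim_col V = d" "dim_row W = d" "dim_col W = d" using assms by auto
  have "mat_adjoint (V * W * mat_adjoint V) = mat_adjoint (mat_adjoint V) * mat_adjoint (V * W)"
    by (rule adj_mult') (simp add: d)
  also have "mat_adjoint (V * W) = mat_adjoint W * mat_adjoint V" by (rule adj_mult') (simp add: d)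
  finally show ?thesis by (simp add: d)
qed

lemma ac_smult: "ac A W f \<Longrightarrow> A \<in> carrier_mat d d \<Longrightarrow> W \<in> carrier_mat d d \<Longrightarrow> ac (k \<cdot>\<^sub>m A) W f"
  by (auto simp: ac_def carrier_dims mult.commute)

fun isM :: "step \<Rightarrow> bool" where "isM (MStep A) = True" | "isM (UStep V) = False"

definition nm :: "step list \<Rightarrow> nat" where "nm ss = length (filter isM ss)"

lemma exec_append: "length os1 = nm xs \<Longrightarrow> exec n (xs @ ys) (os1 @ os2) \<rho> = exec n ys os2 (exec n xs os1 \<rho>)"
proof (induction xs arbitrary: os1 \<rho>)
  case Nil then show ?case by (simp add: nm_def)
next
  case (Cons x xs)
  show ?case
  proof (cases x)
    case (UStep V) then show ?thesis using Cons by (simp add: nm_def)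
  next
    case (MStep A)
    then obtain b os1' where "os1 = b # os1'" "length os1' = nm xs" using Cons.prems
      by (cases os1) (auto simp: nm_def)
    then show ?thesis using Cons MStep by simp
  qed
qed

definition steps_ok :: "nat \<Rightarrow> step list \<Rightarrow> bool" where
  "steps_ok n ss \<longleftrightarrow> (\<forall>st \<in> set ss. case st of UStep V \<Rightarrow> V \<in> carrier_mat (2^n) (2^n) | MStep A \<Rightarrow> A \<in> carrier_mat (2^n) (2^n))"

lemma proj_carrier[simp]: "A \<in> carrier_mat (2^n) (2^n) \<Longrightarrow> proj n A b \<in> carrier_mat (2^n) (2^n)"
  by (simp add: proj_def)

lemma exec_carrier: "steps_ok n ss \<Longrightarrow> \<rho> \<in> carrier_mat (2^n) (2^n) \<Longrightarrow> exec n ss os \<rho> \<in> carrier_mat (2^n) (2^n)"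
proof (induction ss arbitrary: os \<rho>)
  case Nil then show ?case by simp
next
  case (Cons st ss)
  have ok: "steps_ok n ss" using Cons.prems by (simp add: steps_ok_def)
  show ?case
  proof (cases st)
    case (UStep V)
    then have "V \<in> carrier_mat (2^n) (2^n)" using Cons.prems by (simp add: steps_ok_def)
    then show ?thesis using Cons ok UStep by (simp add: carrier_dims)
  next
    case (MStep A)
    then have A: "A \<in> carrier_mat (2^n) (2^n)" using Cons.prems by (simp add: steps_ok_def)
    show ?thesis
    proof (cases os)
      case Nil then show ?thesis using MStep by simp
    next
      case (Cons b os')
      have "proj n A b * \<rho> * proj n A b \<in> carrier_mat (2^n) (2^n)"
        using A Cons.prems by (metis mult_carrier_mat proj_carrier)
      then show ?thesis using Cons.IH[OF ok] MStep \<open>os = b # os'\<close> by simp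
    qed
  qed
qed

lemma xor_cons[simp]: "xor_list (a # as) (b # bs) = (a \<noteq> b) # xor_list as bs"
  by (simp add: xor_list_def)

lemma xor_nil[simp]: "xor_list [] bs = []" by (simp add: xor_list_def)

lemma xor_len[simp]: "length (xor_list as bs) = min (length as) (length bs)"
  by (simp add: xor_list_def)

lemma xor_append: "length a = length c \<Longrightarrow> xor_list (a @ b) (c @ d) = xor_list a c @ xor_list b d"
  by (simp add: xor_list_def)

fun gp :: "operation list \<Rightarrow> complex mat \<Rightarrow> complex mat" where
  "gp [] W = W"
| "gp (Gate V # ops) W = gp ops (V * W * mat_adjoint V)"
| "gp (Meas s S # ops) W = gp ops W"

fun mfl :: "(pauli \<Rightarrow> bool) \<Rightarrow> operation list \<Rightarrow> bool list" where
  "mfl fl [] = []"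
| "mfl fl (Gate V # ops) = mfl fl ops"
| "mfl fl (Meas s S # ops) = fl S # mfl fl ops"

lemma nm_ops: "nm (map (op_step n) ops) = length (mfl fl ops)"
  by (induction fl ops rule: mfl.induct) (auto simp: nm_def op_step_def)

lemma meas_carrier[simp]: "meas_mat n s S \<in> carrier_mat (2^n) (2^n)"
  by (simp add: meas_mat_def)

lemma meas_dims[simp]: "dim_row (meas_mat n s S) = 2^n" "dim_col (meas_mat n s S) = 2^n"
  by (simp_all add: meas_mat_def)

lemma proj_dims[simp]: "dim_row (proj n (meas_mat n s S) b) = 2^n" "dim_col (proj n (meas_mat n s S) b) = 2^n"
  by (simp_all add: proj_def)

lemma block:
  assumes ok: "\<forall>op\<in>set ops. op_ok n op"
    and cm: "\<forall>V s S. Gate V \<in> set ops \<longrightarrow> Meas s S \<in> set ops \<longrightarrow> V * pm n S = pm n S * V"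
    and inv: "\<forall>s S. Meas s S \<in> set ops \<longrightarrow> ac (pm n S) W (fl S) \<and> ac (pm n S) (mat_adjoint W) (fl S)"
    and W: "W \<in> carrier_mat (2^n) (2^n)" and X: "X \<in> carrier_mat (2^n) (2^n)"
    and os: "length os = length (mfl fl ops)"
  shows "exec n (map (op_step n) ops) os (W * X * mat_adjoint W) =
     gp ops W * exec n (map (op_step n) ops) (xor_list os (mfl fl ops)) X * mat_adjoint (gp ops W)"
  using assms
proof (induction ops arbitrary: W X os)
  case Nil then show ?case by simp
next
  case (Cons op ops)
  show ?case
  proof (cases op)
    case (Gate V)
    have U: "unitary (2^n) V" using Cons.prems(1) Gate by (simp add: clifford_gate_def)
    have V: "V \<in> carrier_mat (2^n) (2^n)" using U by (simp add: unitary_def)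
    define W' where "W' = V * W * mat_adjoint V"
    have W': "W' \<in> carrier_mat (2^n) (2^n)" using V Cons.prems(4) by (simp add: W'_def carrier_dims)
    have aW': "mat_adjoint W' = V * mat_adjoint W * mat_adjoint V"
      unfolding W'_def by (rule adj_conj[OF V Cons.prems(4)])
    have eq: "V * (W * X * mat_adjoint W) * mat_adjoint V = W' * (V * X * mat_adjoint V) * mat_adjoint W'"
      unfolding aW' unfolding W'_def using V Cons.prems(4,5) unit_cancel[OF U]
      by (simp add: carrier_dims)
    have inv': "\<forall>s S. Meas s S \<in> set ops \<longrightarrow> ac (pm n S) W' (fl S) \<and> ac (pm n S) (mat_adjoint W') (fl S)"
    proof (intro allI impI)
      fix s S assume m: "Meas s S \<in> set ops"
      have c: "V * pm n S = pm n S * V" using Cons.prems(2) Gate m by auto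
      have i: "ac (pm n S) W (fl S) \<and> ac (pm n S) (mat_adjoint W) (fl S)" using Cons.prems(3) m by auto
      show "ac (pm n S) W' (fl S) \<and> ac (pm n S) (mat_adjoint W') (fl S)"
        unfolding aW' unfolding W'_def
        using ac_conj[OF U pm_carrier Cons.prems(4) c] ac_conj[OF U pm_carrier _ c, of "mat_adjoint W"] i Cons.prems(4)
        by auto
    qed
    have "exec n (map (op_step n) (op # ops)) os (W * X * mat_adjoint W) =
          exec n (map (op_step n) ops) os (W' * (V * X * mat_adjoint V) * mat_adjoint W')"
      using Gate eq by (simp add: op_step_def)
    also have "\<dots> = gp ops W' * exec n (map (op_step n) ops) (xor_list os (mfl fl ops)) (V * X * mat_adjoint V) * mat_adjoint (gp ops W')"
      by (rule Cons.IH) (use Cons.prems Gate inv' W' V in \<open>auto simp: carrier_dims\<close>)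
    also have "\<dots> = gp (op # ops) W * exec n (map (op_step n) (op # ops)) (xor_list os (mfl fl (op # ops))) X * mat_adjoint (gp (op # ops) W)"
      using Gate by (simp add: op_step_def W'_def)
    finally show ?thesis .
  next
    case (Meas s S)
    obtain b os' where os: "os = b # os'" and os': "length os' = length (mfl fl ops)"
      using Cons.prems(6) Meas by (cases os) auto
    have W: "W \<in> carrier_mat (2^n) (2^n)" and X: "X \<in> carrier_mat (2^n) (2^n)" using Cons.prems by auto
    let ?A = "meas_mat n s S"
    have i: "ac (pm n S) W (fl S) \<and> ac (pm n S) (mat_adjoint W) (fl S)" using Cons.prems(3) Meas by auto
    have a1: "ac ?A W (fl S)" unfolding meas_mat_def using i W by (intro ac_smult) auto
    have a2: "ac ?A (mat_adjoint W) (fl S)" unfolding meas_mat_def using i W by (intro ac_smult) auto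
    define b' where "b' = (b \<noteq> fl S)"
    have p1: "proj n ?A b * W = W * proj n ?A b'" unfolding b'_def by (rule proj_comm[OF meas_carrier W a1])
    have p2: "proj n ?A b' * mat_adjoint W = mat_adjoint W * proj n ?A b"
      using proj_comm[OF meas_carrier adj_carrier[OF W] a2, of b'] unfolding b'_def
      by (cases b; cases "fl S") simp_all
    have eq: "proj n ?A b * (W * X * mat_adjoint W) * proj n ?A b = W * (proj n ?A b' * X * proj n ?A b') * mat_adjoint W"
    proof -
      have "proj n ?A b * (W * X * mat_adjoint W) * proj n ?A b = (proj n ?A b * W) * X * (mat_adjoint W * proj n ?A b)"
        using W X by (simp add: carrier_dims)
      also have "\<dots> = (W * proj n ?A b') * X * (proj n ?A b' * mat_adjoint W)" by (simp only: p1 p2)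
      also have "\<dots> = W * (proj n ?A b' * X * proj n ?A b') * mat_adjoint W"
        using W X by (simp add: carrier_dims)
      finally show ?thesis .
    qed
    have "exec n (map (op_step n) (op # ops)) os (W * X * mat_adjoint W) =
          exec n (map (op_step n) ops) os' (W * (proj n ?A b' * X * proj n ?A b') * mat_adjoint W)"
      using Meas eq os by (simp add: op_step_def)
    also have "\<dots> = gp ops W * exec n (map (op_step n) ops) (xor_list os' (mfl fl ops)) (proj n ?A b' * X * proj n ?A b') * mat_adjoint (gp ops W)"
      by (rule Cons.IH) (use Cons.prems Meas os' W X in \<open>auto simp: carrier_dims\<close>)
    also have "\<dots> = gp (op # ops) W * exec n (map (op_step n) (op # ops)) (xor_list os (mfl fl (op # ops))) X * mat_adjoint (gp (op # ops) W)"
      using Meas os by (simp add: op_step_def b'_def)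
    finally show ?thesis .
  qed
qed



definition gstep :: "complex mat \<Rightarrow> operation \<Rightarrow> complex mat" where
  "gstep A op = (case op of Gate V \<Rightarrow> V * A | Meas s P \<Rightarrow> A)"

lemma gp_foldl: assumes "\<forall>op\<in>set ops. op_ok n op" "A \<in> carrier_mat (2^n) (2^n)" "W \<in> carrier_mat (2^n) (2^n)"
  shows "gp ops (A * W * mat_adjoint A) = foldl gstep A ops * W * mat_adjoint (foldl gstep A ops)"
  using assms
proof (induction ops arbitrary: A)
  case Nil then show ?case by simp
next
  case (Cons op ops)
  show ?case
  proof (cases op)
    case (Gate V)
    have V: "V \<in> carrier_mat (2^n) (2^n)" using Cons.prems Gate by (simp add: clifford_gate_def unitary_def)
    have "V * (A * W * mat_adjoint A) * mat_adjoint V = (V * A) * W * mat_adjoint (V * A)"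
      using V Cons.prems(2,3) by (simp add: adj_mult' carrier_dims)
    moreover have "V * A \<in> carrier_mat (2^n) (2^n)" using V Cons.prems(2) by (metis mult_carrier_mat)
    ultimately show ?thesis using Cons Gate by (simp add: gstep_def)
  next
    case (Meas s S) then show ?thesis using Cons by (simp add: gstep_def)
  qed
qed

lemma foldl_gstep_clifford: assumes "\<forall>op\<in>set ops. op_ok n op" "clifford_gate n A"
  shows "clifford_gate n (foldl gstep A ops)"
  using assms
proof (induction ops arbitrary: A)
  case Nil then show ?case by simp
next
  case (Cons op ops)
  then show ?case by (cases op) (auto simp: gstep_def intro: clifford_mult)
qed

lemma level_unitary_filter:
  "foldl (\<lambda>A (k, op). case op of Gate V \<Rightarrow> if k = l then V * A else A | Meas s P \<Rightarrow> A) acc C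
   = foldl gstep acc (map snd (filter (\<lambda>x. fst x = l) C))"
proof (induction C arbitrary: acc)
  case Nil then show ?case by simp
next
  case (Cons x C)
  obtain k op where x: "x = (k, op)" by (cases x)
  show ?case using Cons x by (cases op) (auto simp: gstep_def)
qed

lemma level_unitary_eq: "level_unitary n C l = foldl gstep (1\<^sub>m (2^n)) (map snd (filter (\<lambda>x. fst x = l) C))"
  unfolding level_unitary_def by (rule level_unitary_filter)

lemma filter_split_sorted: "sorted (map fst xs) \<Longrightarrow>
  filter (\<lambda>x. fst x \<le> Suc L) xs = filter (\<lambda>x. fst x \<le> L) xs @ filter (\<lambda>x. fst x = Suc L) xs"
proof (induction xs)
  case Nil then show ?case by simp
next
  case (Cons x xs)
  have s: "sorted (map fst xs)" and ge: "\<forall>y\<in>set xs. fst x \<le> fst y" using Cons.prems by auto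
  show ?case
  proof (cases "fst x \<le> L")
    case True then show ?thesis using Cons.IH[OF s] by simp
  next
    case False
    then have a: "filter (\<lambda>x. fst x \<le> L) xs = []" using ge by (auto simp: filter_empty_conv)
    show ?thesis
    proof (cases "fst x = Suc L")
      case True
      have "filter (\<lambda>x. fst x \<le> Suc L) xs = filter (\<lambda>x. fst x = Suc L) xs"
        using ge True by (intro filter_cong) auto
      then show ?thesis using True a by simp
    next
      case False
      have "filter (\<lambda>x. fst x \<le> Suc L) xs = []" "filter (\<lambda>x. fst x = Suc L) xs = []"
        using ge False \<open>\<not> fst x \<le> L\<close> by (auto simp: filter_empty_conv)
      then show ?thesis using False \<open>\<not> fst x \<le> L\<close> a by simp
    qed
  qed
qed

lemma concat_levels: assumes "sorted (map fst xs)" "\<forall>x\<in>set xs. fst x \<ge> 1"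
  shows "concat (map (\<lambda>l. filter (\<lambda>x. fst x = l) xs) [1..<Suc L]) = filter (\<lambda>x. fst x \<le> L) xs"
proof (induction L)
  case 0
  have "filter (\<lambda>x. fst x \<le> 0) xs = []" using assms(2) by (auto simp: filter_empty_conv)
  then show ?case by simp
next
  case (Suc L)
  then show ?case using filter_split_sorted[OF assms(1)] by simp
qed

lemma measurements_append[simp]: "measurements (xs @ ys) = measurements xs @ measurements ys"
  by (simp add: measurements_def)

lemma measurements_concat: "measurements (concat xss) = concat (map measurements xss)"
  by (induction xss) (auto simp: measurements_def)

lemma measurements_mfl: assumes "\<forall>x\<in>set xs. fst x = l"
  shows "map (\<lambda>(l, s, P). g l P) (measurements xs) = mfl (g l) (map snd xs)"
  using assms
proof (induction xs)
  case Nil then show ?case by (simp add: measurements_def)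
next
  case (Cons x xs)
  obtain k op where x: "x = (k, op)" by (cases x)
  show ?case using Cons x by (cases op) (auto simp: measurements_def)
qed

lemma len_measurements_mfl: "length (measurements xs) = length (mfl g (map snd xs))"
proof (induction xs)
  case Nil then show ?case by (simp add: measurements_def)
next
  case (Cons x xs)
  obtain k op where x: "x = (k, op)" by (cases x)
  show ?case using Cons x by (cases op) (auto simp: measurements_def)
qed



definition stepsG :: "nat \<Rightarrow> circuit \<Rightarrow> fault \<Rightarrow> nat \<Rightarrow> step list" where
  "stepsG n C G L = UStep (pauli_mat n (G 0)) #
     concat (map (\<lambda>l. map (op_step n \<circ> snd) (filter (\<lambda>x. fst x = l) C) @ [UStep (pauli_mat n (G l))])
                 [1..<Suc L])"

definition opsl :: "circuit \<Rightarrow> nat \<Rightarrow> operation list" where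
  "opsl C l = map snd (filter (\<lambda>x. fst x = l) C)"

definition mc :: "circuit \<Rightarrow> nat \<Rightarrow> (nat \<times> bool \<times> pauli) list" where
  "mc C L = measurements (concat (map (\<lambda>l. filter (\<lambda>x. fst x = l) C) [1..<Suc L]))"

lemma stepsG_0: "stepsG n C G 0 = [UStep (pm n (G 0))]"
  by (simp add: stepsG_def)

lemma stepsG_Suc: "stepsG n C G (Suc L) = stepsG n C G L @ (map (op_step n) (opsl C (Suc L)) @ [UStep (pm n (G (Suc L)))])"
  by (simp add: stepsG_def opsl_def)

lemma mc_0: "mc C 0 = []" by (simp add: mc_def measurements_def)

lemma mc_Suc: "mc C (Suc L) = mc C L @ measurements (filter (\<lambda>x. fst x = Suc L) C)"
  by (simp add: mc_def)

lemma nm_append: "nm (xs @ ys) = nm xs + nm ys" by (simp add: nm_def)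

lemma nm_stepsG: "nm (stepsG n C G L) = length (mc C L)"
proof (induction L)
  case 0 then show ?case by (simp add: stepsG_0 mc_0 nm_def)
next
  case (Suc L)
  have a: "nm (map (op_step n) (opsl C (Suc L))) = length (measurements (filter (\<lambda>x. fst x = Suc L) C))"
    using nm_ops[of n "opsl C (Suc L)" "\<lambda>_. False"] len_measurements_mfl[of "filter (\<lambda>x. fst x = Suc L) C" "\<lambda>_. False"]
    by (simp add: opsl_def)
  have b: "nm [UStep V] = 0" for V by (simp add: nm_def)
  show ?case unfolding stepsG_Suc mc_Suc nm_append a b Suc by simp
qed

lemma unitary_adj: "unitary d U \<Longrightarrow> unitary d (mat_adjoint U)"
  by (auto simp: unitary_def)

lemma pauli_comm_sym: "pauli_comm P Q = pauli_comm Q P"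
proof -
  have "anticomm1 a b = anticomm1 b a" for a b by (auto simp: anticomm1_def)
  then show ?thesis unfolding pauli_comm_def by (simp add: min.commute)
qed

lemma cumulant_pauli: assumes "clifford_circuit n C" "is_fault n C F" "L \<le> depth C"
  shows "is_pauli n (cumulant n C F L)"
  using assms(3)
proof (induction L)
  case 0 then show ?case using assms(2) by (simp add: is_fault_def)
next
  case (Suc L)
  have "clifford_gate n (level_unitary n C (Suc L))"
    unfolding level_unitary_eq
    by (rule foldl_gstep_clifford) (use assms(1) in \<open>auto simp: clifford_circuit_def clifford_one\<close>)
  then have "is_pauli n (clifford_conj n (level_unitary n C (Suc L)) (cumulant n C F L))"
    using clifford_conj_spec Suc by auto
  moreover have "is_pauli n (F (Suc L))" using assms(2) Suc.prems by (simp add: is_fault_def)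
  ultimately show ?case by (simp add: is_pauli_def pauli_mult_def)
qed

lemma circ_ok: "clifford_circuit n C \<Longrightarrow> op \<in> set (opsl C l) \<Longrightarrow> op_ok n op"
  by (auto simp: clifford_circuit_def opsl_def)

lemma circ_comm: assumes "clifford_circuit n C" "Gate V \<in> set (opsl C l)" "Meas s S \<in> set (opsl C l)"
  shows "V * pm n S = pm n S * V"
proof -
  have g: "(l, Gate V) \<in> set C" and m: "(l, Meas s S) \<in> set C" using assms(2,3) by (auto simp: opsl_def)
  obtain i where i: "i < length C" "C ! i = (l, Gate V)" using g by (auto simp: in_set_conv_nth)
  obtain j where j: "j < length C" "C ! j = (l, Meas s S)" using m by (auto simp: in_set_conv_nth)
  have "i \<noteq> j" using i j by auto
  then have disj: "gate_support n V \<inter> pauli_support S = {}"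
    using assms(1) i j unfolding clifford_circuit_def by fastforce
  have V: "clifford_gate n V" and S: "is_pauli n S"
    using assms(1) g m by (auto simp: clifford_circuit_def)
  show ?thesis
    by (rule gate_comm_pauli) (use V S disj in \<open>auto simp: clifford_gate_def unitary_def\<close>)
qed



lemma ac_pauli: assumes "is_pauli n S" "is_pauli n P"
  shows "ac (pm n S) (k \<cdot>\<^sub>m pm n P) (pauli_comm P S)"
proof -
  have "pm n S * pm n P = (if pauli_comm S P then -1 else 1) \<cdot>\<^sub>m (pm n P * pm n S)"
    by (rule pm_comm) (use assms in \<open>auto simp: is_pauli_def\<close>)
  then show ?thesis by (simp add: ac_def sg_def pauli_comm_sym[of S P] mult.commute)
qed

lemma steps_ok_ops: "\<forall>op\<in>set ops. op_ok n op \<Longrightarrow> steps_ok n (map (op_step n) ops)"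
  by (auto simp: steps_ok_def op_step_def clifford_gate_def unitary_def split: operation.splits)

lemma steps_ok_append: "steps_ok n (xs @ ys) = (steps_ok n xs \<and> steps_ok n ys)"
  by (auto simp: steps_ok_def)

lemma steps_ok_stepsG: assumes "clifford_circuit n C" shows "steps_ok n (stepsG n C G L)"
proof (induction L)
  case 0 then show ?case by (simp add: stepsG_0 steps_ok_def)
next
  case (Suc L)
  have "steps_ok n (map (op_step n) (opsl C (Suc L)))"
    by (rule steps_ok_ops) (use circ_ok[OF assms] in auto)
  then show ?case using Suc by (simp add: stepsG_Suc steps_ok_append) (simp add: steps_ok_def)
qed

lemma main_ind:
  assumes circ: "clifford_circuit n C" and flt: "is_fault n C F" and X: "X \<in> carrier_mat (2^n) (2^n)"
  shows "L \<le> depth C \<Longrightarrow> \<exists>d. unitary (2^n) (d \<cdot>\<^sub>m pm n (cumulant n C F L)) \<and>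
    (\<forall>os. length os = length (mc C L) \<longrightarrow>
      exec n (stepsG n C F L) os X =
      (d \<cdot>\<^sub>m pm n (cumulant n C F L)) *
      exec n (stepsG n C (no_fault n) L) (xor_list os (map (\<lambda>(l, s, P). pauli_comm (cumulant n C F (l - 1)) P) (mc C L))) X *
      mat_adjoint (d \<cdot>\<^sub>m pm n (cumulant n C F L)))"
proof (induction L)
  case 0
  have "unitary (2^n) (1 \<cdot>\<^sub>m pm n (cumulant n C F 0))" by (simp add: pm_unitary)
  moreover have "exec n (stepsG n C F 0) os X =
      (1 \<cdot>\<^sub>m pm n (cumulant n C F 0)) *
      exec n (stepsG n C (no_fault n) 0) (xor_list os fs) X *
      mat_adjoint (1 \<cdot>\<^sub>m pm n (cumulant n C F 0))" if "length os = length (mc C 0)" for os fs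
  proof -
    have "os = []" using that by (simp add: mc_0)
    then show ?thesis using X by (simp add: stepsG_0 no_fault_def pm_id carrier_dims)
  qed
  ultimately show ?case by blast
next
  case (Suc L)
  have LD: "L \<le> depth C" using Suc.prems by simp
  obtain d where Wu: "unitary (2^n) (d \<cdot>\<^sub>m pm n (cumulant n C F L))" and
    IH: "\<And>os. length os = length (mc C L) \<Longrightarrow>
      exec n (stepsG n C F L) os X =
      (d \<cdot>\<^sub>m pm n (cumulant n C F L)) *
      exec n (stepsG n C (no_fault n) L) (xor_list os (map (\<lambda>(l, s, P). pauli_comm (cumulant n C F (l - 1)) P) (mc C L))) X *
      mat_adjoint (d \<cdot>\<^sub>m pm n (cumulant n C F L))"
    using Suc.IH[OF LD] by blast
  define P where "P = cumulant n C F L"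
  define W where "W = d \<cdot>\<^sub>m pm n P"
  define ops where "ops = opsl C (Suc L)"
  define fl where "fl = (\<lambda>S. pauli_comm P S)"
  define g2 where "g2 = mfl fl ops"
  define G where "G = level_unitary n C (Suc L)"
  define Q where "Q = clifford_conj n G P"
  define fv where "fv = (\<lambda>(l::nat, s::bool, S). pauli_comm (cumulant n C F (l - 1)) S)"
  define pF where "pF = pm n (F (Suc L))"
  have Pp: "is_pauli n P" unfolding P_def by (rule cumulant_pauli[OF circ flt LD])
  have opsok: "\<forall>op\<in>set ops. op_ok n op" using circ_ok[OF circ] by (auto simp: ops_def)
  have Gc: "clifford_gate n G" unfolding G_def level_unitary_eq
    by (rule foldl_gstep_clifford) (use opsok in \<open>auto simp: clifford_one ops_def opsl_def\<close>)
  have GU: "unitary (2^n) G" using Gc by (simp add: clifford_gate_def)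
  have Gcar: "G \<in> carrier_mat (2^n) (2^n)" using GU by (simp add: unitary_def)
  obtain c where Qp: "is_pauli n Q" and c: "G * pm n P * mat_adjoint G = c \<cdot>\<^sub>m pm n Q"
    using clifford_conj_spec[OF Gc Pp] unfolding Q_def by blast
  have Fp: "is_pauli n (F (Suc L))" using flt Suc.prems by (simp add: is_fault_def)
  have cumS: "cumulant n C F (Suc L) = pauli_mult (F (Suc L)) Q"
    by (simp add: Q_def G_def P_def)
  have Wc: "W \<in> carrier_mat (2^n) (2^n)" by (simp add: W_def)
  have gpW: "gp ops W = G * W * mat_adjoint G"
  proof -
    have "gp ops W = gp ops (1\<^sub>m (2^n) * W * mat_adjoint (1\<^sub>m (2^n)))" using Wc by (simp add: carrier_dims)
    also have "\<dots> = G * W * mat_adjoint G"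
      unfolding G_def level_unitary_eq opsl_def[symmetric] ops_def[symmetric] by (rule gp_foldl) (use opsok Wc in auto)
    finally show ?thesis .
  qed
  have gpc: "gp ops W \<in> carrier_mat (2^n) (2^n)" unfolding gpW using Gcar Wc by (metis mult_carrier_mat adj_carrier)
  define ph where "ph = (\<Prod>q<n. ph1 (F (Suc L) ! q) (Q ! q))"
  have Wn: "pF * gp ops W = (d * c * ph) \<cdot>\<^sub>m pm n (cumulant n C F (Suc L))"
  proof -
    have "gp ops W = d \<cdot>\<^sub>m (G * pm n P * mat_adjoint G)"
      unfolding gpW unfolding W_def using Gcar by (simp add: carrier_dims)
    also have "\<dots> = (d * c) \<cdot>\<^sub>m pm n Q" unfolding c by simp
    finally have "pF * gp ops W = (d * c) \<cdot>\<^sub>m (pF * pm n Q)" by (simp add: pF_def)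
    also have "pF * pm n Q = ph \<cdot>\<^sub>m pm n (cumulant n C F (Suc L))"
      unfolding pF_def ph_def cumS by (rule pm_mult) (use Fp Qp in \<open>auto simp: is_pauli_def\<close>)
    finally show ?thesis by simp
  qed
  have WnU: "unitary (2^n) (pF * gp ops W)"
  proof -
    have "unitary (2^n) (G * W * mat_adjoint G)"
      using Wu GU by (intro unitary_mult unitary_adj) (auto simp: W_def P_def)
    then show ?thesis unfolding gpW pF_def by (rule unitary_mult[OF pm_unitary])
  qed
  have fpS: "map fv (mc C (Suc L)) = map fv (mc C L) @ g2"
  proof -
    have "map fv (measurements (filter (\<lambda>x. fst x = Suc L) C)) =
        mfl ((\<lambda>l S. pauli_comm (cumulant n C F (l - 1)) S) (Suc L)) (map snd (filter (\<lambda>x. fst x = Suc L) C))"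
      unfolding fv_def by (rule measurements_mfl) auto
    then show ?thesis by (simp add: mc_Suc g2_def fl_def P_def ops_def opsl_def)
  qed
  have lg2: "length g2 = length (measurements (filter (\<lambda>x. fst x = Suc L) C))"
    unfolding g2_def ops_def opsl_def by (rule len_measurements_mfl[symmetric])
  have nmss: "nm (map (op_step n) ops) = length g2" unfolding g2_def by (rule nm_ops)
  have inv: "\<forall>s S. Meas s S \<in> set ops \<longrightarrow> ac (pm n S) W (fl S) \<and> ac (pm n S) (mat_adjoint W) (fl S)"
  proof (intro allI impI)
    fix s S assume "Meas s S \<in> set ops"
    then have Sp: "is_pauli n S" using opsok by fastforce
    have "mat_adjoint W = cnj d \<cdot>\<^sub>m pm n P" by (simp add: W_def adj_smult pm_adj)
    then show "ac (pm n S) W (fl S) \<and> ac (pm n S) (mat_adjoint W) (fl S)"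
      unfolding fl_def W_def using ac_pauli[OF Sp Pp] by simp
  qed
  have cm: "\<forall>V s S. Gate V \<in> set ops \<longrightarrow> Meas s S \<in> set ops \<longrightarrow> V * pm n S = pm n S * V"
    using circ_comm[OF circ] by (auto simp: ops_def)
  have main: "exec n (stepsG n C F (Suc L)) os X =
      (pF * gp ops W) * exec n (stepsG n C (no_fault n) (Suc L)) (xor_list os (map fv (mc C (Suc L)))) X *
      mat_adjoint (pF * gp ops W)" if los: "length os = length (mc C (Suc L))" for os
  proof -
    define k where "k = length (mc C L)"
    define os1 where "os1 = take k os"
    define os2 where "os2 = drop k os"
    have osq: "os = os1 @ os2" by (simp add: os1_def os2_def)
    have l1: "length os1 = length (mc C L)" using los by (simp add: os1_def k_def mc_Suc)
    have l2: "length os2 = length g2" using los lg2 by (simp add: os2_def k_def mc_Suc)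
    define Y1 where "Y1 = exec n (stepsG n C (no_fault n) L) (xor_list os1 (map fv (mc C L))) X"
    have Y1c: "Y1 \<in> carrier_mat (2^n) (2^n)"
      unfolding Y1_def by (rule exec_carrier[OF steps_ok_stepsG[OF circ] X])
    define Y2 where "Y2 = exec n (map (op_step n) ops) (xor_list os2 g2) Y1"
    have Y2c: "Y2 \<in> carrier_mat (2^n) (2^n)"
      unfolding Y2_def by (rule exec_carrier[OF steps_ok_ops[OF opsok] Y1c])
    have "exec n (stepsG n C F (Suc L)) os X =
        exec n (map (op_step n) ops @ [UStep pF]) (os2 @ []) (exec n (stepsG n C F L) os1 X)"
      unfolding stepsG_Suc osq by (simp add: exec_append[OF l1[folded nm_stepsG[of n C F L]]] ops_def pF_def)
    also have "\<dots> = exec n (map (op_step n) ops @ [UStep pF]) (os2 @ []) (W * Y1 * mat_adjoint W)"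
      using IH[OF l1] by (simp add: Y1_def W_def P_def fv_def)
    also have "\<dots> = pF * exec n (map (op_step n) ops) os2 (W * Y1 * mat_adjoint W) * mat_adjoint pF"
      by (subst exec_append[OF l2[folded nmss]]) simp
    also have "exec n (map (op_step n) ops) os2 (W * Y1 * mat_adjoint W) = gp ops W * Y2 * mat_adjoint (gp ops W)"
      unfolding Y2_def g2_def by (rule block[OF opsok cm inv Wc Y1c]) (use l2 in \<open>simp add: g2_def\<close>)
    also have "pF * (gp ops W * Y2 * mat_adjoint (gp ops W)) * mat_adjoint pF =
        (pF * gp ops W) * Y2 * mat_adjoint (pF * gp ops W)"
      using Y2c gpc by (simp add: adj_mult' carrier_dims pF_def)
    also have "Y2 = exec n (stepsG n C (no_fault n) (Suc L)) (xor_list os (map fv (mc C (Suc L)))) X"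
    proof -
      have "xor_list os (map fv (mc C (Suc L))) = xor_list os1 (map fv (mc C L)) @ (xor_list os2 g2 @ [])"
        unfolding osq fpS by (simp add: xor_append l1)
      moreover have "length (xor_list os1 (map fv (mc C L))) = nm (stepsG n C (no_fault n) L)"
        using l1 by (simp add: nm_stepsG)
      moreover have "length (xor_list os2 g2) = nm (map (op_step n) ops)" using l2 nmss by simp
      ultimately have e: "exec n (stepsG n C (no_fault n) (Suc L)) (xor_list os (map fv (mc C (Suc L)))) X =
          exec n [UStep (pm n (no_fault n (Suc L)))] [] Y2"
        unfolding stepsG_Suc Y2_def Y1_def ops_def
        by (simp only: exec_append)
      show ?thesis unfolding e using Y2c by (simp add: no_fault_def pm_id carrier_dims)
    qed
    finally show ?thesis .
  qed
  show ?case
    by (rule exI[of _ "d * c * ph"]) (use WnU Wn main in \<open>simp add: fv_def\<close>)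
qed



lemma trace_cyc: assumes "A \<in> carrier_mat d d" "B \<in> carrier_mat d d"
  shows "mat_trace (A * B) = mat_trace (B * (A :: complex mat))"
proof -
  have "mat_trace (A * B) = (\<Sum>i<d. \<Sum>k<d. A $$ (i,k) * B $$ (k,i))"
    using assms by (simp add: mat_trace_def scalar_prod_def lessThan_atLeast0)
  also have "\<dots> = (\<Sum>k<d. \<Sum>i<d. B $$ (k,i) * A $$ (i,k))"
    by (subst sum.swap) (simp add: mult.commute)
  also have "\<dots> = mat_trace (B * A)"
    using assms by (simp add: mat_trace_def scalar_prod_def lessThan_atLeast0)
  finally show ?thesis .
qed

lemma trace_conj: assumes "unitary d W" "Y \<in> carrier_mat d d"
  shows "mat_trace (W * Y * mat_adjoint W) = mat_trace Y"
proof -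
  have W: "W \<in> carrier_mat d d" using assms by (simp add: unitary_def)
  have "mat_trace (W * Y * mat_adjoint W) = mat_trace (W * (Y * mat_adjoint W))"
    using W assms by (simp add: carrier_dims)
  also have "\<dots> = mat_trace ((Y * mat_adjoint W) * W)"
    by (rule trace_cyc) (use W assms in \<open>auto intro: mult_carrier_mat\<close>)
  also have "\<dots> = mat_trace (Y * (mat_adjoint W * W))" using W assms by (simp add: carrier_dims)
  also have "\<dots> = mat_trace Y" using assms by (simp add: unitary_def carrier_dims)
  finally show ?thesis .
qed

lemma phase_unit: assumes "unitary (2^n) (k \<cdot>\<^sub>m pm n P)" shows "k * cnj k = 1"
proof -
  have "(k \<cdot>\<^sub>m pm n P) * mat_adjoint (k \<cdot>\<^sub>m pm n P) = (k * cnj k) \<cdot>\<^sub>m 1\<^sub>m (2^n)"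
    by (simp add: adj_smult pm_adj pm_sq mult.commute)
  then have "(k * cnj k) \<cdot>\<^sub>m 1\<^sub>m (2^n) = 1\<^sub>m (2^n)" using assms by (simp add: unitary_def)
  then have "((k * cnj k) \<cdot>\<^sub>m 1\<^sub>m (2^n)) $$ (0,0) = (1\<^sub>m (2^n) :: complex mat) $$ (0,0)" by simp
  then show ?thesis by simp
qed

lemma conj_phase: assumes "k * cnj k = 1" "Z \<in> carrier_mat (2^n) (2^n)"
  shows "(k \<cdot>\<^sub>m pm n P) * Z * mat_adjoint (k \<cdot>\<^sub>m pm n P) = pm n P * Z * pm n P"
proof -
  have "cnj k * k = 1" using assms(1) by (simp add: mult.commute)
  then show ?thesis using assms(2) by (simp add: adj_smult pm_adj carrier_dims)
qed

lemma depth_ge: "x \<in> set C \<Longrightarrow> fst x \<le> depth C"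
  unfolding depth_def by (rule Max_ge) auto

theorem mainTheorem5:
  fixes n :: nat and C :: circuit and \<rho> :: "complex mat" and F :: fault
    and E :: "complex mat" and c :: complex
  assumes "clifford_circuit n C"
    and "density_mat n \<rho>"
    and "is_fault n C F"
    and "c \<in> {1, -1, \<i>, -\<i>}"
    and "E = c \<cdot>\<^sub>m pauli_mat n (cumulant n C F (depth C))"
    and "hermitian E"
  shows "\<forall>os. length os = num_meas C \<longrightarrow>
           prob_F n C F \<rho> os = prob n C \<rho> (xor_list os (flip_vector n C F)) \<and>
           (prob_F n C F \<rho> os \<noteq> 0 \<longrightarrow>
              state_F n C F \<rho> os = E * state n C \<rho> (xor_list os (flip_vector n C F)) * E)"
proof (intro allI impI)
  fix os :: "bool list" assume los: "length os = num_meas C"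
  let ?D = "depth C"
  let ?P = "cumulant n C F ?D"
  define fv where "fv = (\<lambda>(l::nat, s::bool, S). pauli_comm (cumulant n C F (l - 1)) S)"
  have circ: "clifford_circuit n C" and flt: "is_fault n C F" using assms by auto
  have rho: "\<rho> \<in> carrier_mat (2^n) (2^n)" using assms(2) by (simp add: density_mat_def)
  have steps: "faulty_steps n C G = stepsG n C G ?D" for G
    by (simp add: faulty_steps_def stepsG_def)
  have mcD: "mc C ?D = measurements C"
  proof -
    have "concat (map (\<lambda>l. filter (\<lambda>x. fst x = l) C) [1..<Suc ?D]) = filter (\<lambda>x. fst x \<le> ?D) C"
      by (rule concat_levels) (use circ in \<open>auto simp: clifford_circuit_def\<close>)
    also have "\<dots> = C" by (rule filter_True) (auto simp: depth_ge)
    finally show ?thesis by (simp add: mc_def)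
  qed
  have flip: "flip_vector n C F = map fv (mc C ?D)" by (simp add: mcD flip_vector_def fv_def)
  obtain d where Wu: "unitary (2^n) (d \<cdot>\<^sub>m pm n ?P)" and
    eq: "\<And>os. length os = length (mc C ?D) \<Longrightarrow>
      exec n (stepsG n C F ?D) os \<rho> =
      (d \<cdot>\<^sub>m pm n ?P) * exec n (stepsG n C (no_fault n) ?D) (xor_list os (map fv (mc C ?D))) \<rho> *
      mat_adjoint (d \<cdot>\<^sub>m pm n ?P)"
    using main_ind[OF circ flt rho, of ?D] unfolding fv_def by blast
  define Y where "Y = exec n (stepsG n C (no_fault n) ?D) (xor_list os (flip_vector n C F)) \<rho>"
  have Yc: "Y \<in> carrier_mat (2^n) (2^n)" unfolding Y_def by (rule exec_carrier[OF steps_ok_stepsG[OF circ] rho])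
  have l: "length os = length (mc C ?D)" using los by (simp add: mcD num_meas_def)
  have ex: "exec n (faulty_steps n C F) os \<rho> = (d \<cdot>\<^sub>m pm n ?P) * Y * mat_adjoint (d \<cdot>\<^sub>m pm n ?P)"
    unfolding steps Y_def flip by (rule eq[OF l])
  have pY: "prob n C \<rho> (xor_list os (flip_vector n C F)) = Re (mat_trace Y)"
    by (simp add: prob_def prob_F_def Y_def steps)
  have sY: "state n C \<rho> (xor_list os (flip_vector n C F)) = complex_of_real (1 / Re (mat_trace Y)) \<cdot>\<^sub>m Y"
    by (simp add: state_def state_F_def prob_F_def Y_def steps)
  have pF: "prob_F n C F \<rho> os = Re (mat_trace Y)"
    unfolding prob_F_def ex using trace_conj[OF Wu Yc] by simp
  have sF: "state_F n C F \<rho> os = complex_of_real (1 / Re (mat_trace Y)) \<cdot>\<^sub>m (pm n ?P * Y * pm n ?P)"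
    unfolding state_F_def pF unfolding ex using conj_phase[OF phase_unit[OF Wu] Yc] by simp
  have cc: "c * cnj c = 1" using assms(4) by auto
  have Eadj: "mat_adjoint E = E" using assms(6) by (simp add: hermitian_def)
  have "E * Y * E = E * Y * mat_adjoint E" by (simp add: Eadj)
  also have "\<dots> = pm n ?P * Y * pm n ?P" unfolding assms(5) by (rule conj_phase[OF cc Yc])
  finally have EYE: "E * Y * E = pm n ?P * Y * pm n ?P" .
  show "prob_F n C F \<rho> os = prob n C \<rho> (xor_list os (flip_vector n C F)) \<and>
        (prob_F n C F \<rho> os \<noteq> 0 \<longrightarrow>
           state_F n C F \<rho> os = E * state n C \<rho> (xor_list os (flip_vector n C F)) * E)"
  proof
    show "prob_F n C F \<rho> os = prob n C \<rho> (xor_list os (flip_vector n C F))" using pF pY by simp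
    show "prob_F n C F \<rho> os \<noteq> 0 \<longrightarrow>
           state_F n C F \<rho> os = E * state n C \<rho> (xor_list os (flip_vector n C F)) * E"
    proof
      have "E * state n C \<rho> (xor_list os (flip_vector n C F)) * E =
          complex_of_real (1 / Re (mat_trace Y)) \<cdot>\<^sub>m (E * Y * E)"
        unfolding sY using Yc by (simp add: assms(5) carrier_dims)
      then show "state_F n C F \<rho> os = E * state n C \<rho> (xor_list os (flip_vector n C F)) * E"
        using sF EYE by simp
    qed
  qed
qed

end
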